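(* Let $G$, $\varkappa$, $\mathcal K=\mathcal K(G,\varkappa)$ and let $\succ$ be any hereditary ordering of $\mathcal K$ produced by the construction described in the context. Let $\rho\in\mathcal K$, $\rho\ne\emptyset$, let $v\in\mathbb V_\rho$, and suppose $\mathbb V_\rho(v)\ne\emptyset$. Then there is a vertex $u\in\mathbb V_\rho(v)$ such that $|g_{wz}-1|\le|g_{uv}-1|$ for all $w,z\in\mathbb V_\rho(v)\cup\{v\}$.
   Context: $G=(g_{uv})_{1\le u,v\le m}$ is a symmetric complex matrix with units on the diagonal and $\varkappa>0$. $\Gamma(G,\varkappa)$ is the graph on $[m]=\{1,\dots,m\}$ with $\{u,v\}$ an edge iff $|g_{uv}-1|<\varkappa$, and $\mathcal K=\mathcal K(G,\varkappa)$ is its clique complex. For a strict total ordering $\succ$ of $\mathcal K$ and non-empty $\sigma$, $\mu(\sigma)$ is the $\succ$-largest facet of $\sigma$. Construction of $\succ$: simplices of larger dimension are larger; vertices are ordered arbitrarily; assuming $\succ$ is defined on $(s-1)$-simplices, for $s$-simplices put $\sigma\succ\tau$ if $\mu(\sigma)\succ\mu(\tau)$; for each $(s-1)$-simplex $\rho$, let $\mathbb V_\rho$ be the set of vertices $v\notin\rho$ with $\rho\cup\{v\}\in\mathcal K$ and $\mu(\rho\cup\{v\})=\rho$, $t=|\mathbb V_\rho|$; choose $v_1,\dots,v_t$ successively: for $j<t$, among pairs $w\ne z$ in $\mathbb V_\rho\setminus\{v_1,\dots,v_{j-1}\}$ pick a pair $(w^0,z^0)$ maximizing $|g_{wz}-1|$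 (ties broken arbitrarily) and set $v_j=w^0$; $v_t$ is the remaining vertex; then put $\rho\cup\{v_1\}\succ\rho\cup\{v_2\}\succ\dots\succ\rho\cup\{v_t\}$. For $v\in\mathbb V_\rho$, $\mathbb V_\rho(v)$ is the set of $u\in\mathbb V_\rho$ with $\rho\cup\{v\}\succ\rho\cup\{u\}$. *)

theory Defs
  imports Complex_Main
begin

text \<open>Vertices are the natural numbers 1..m; the matrix G is a function nat => nat => complex.
  The ordering is a binary relation gt on vertex sets, gt a b meaning a is larger than b.\<close>

definition clique_complex :: "(nat \<Rightarrow> nat \<Rightarrow> complex) \<Rightarrow> real \<Rightarrow> nat \<Rightarrow> nat set set" where
  "clique_complex G kappa m =
     {\<sigma>. \<sigma> \<subseteq> {1..m} \<and> (\<forall>u\<in>\<sigma>. \<forall>v\<in>\<sigma>. u \<noteq> v \<longrightarrow> cmod (G u v - 1) < kappa)}"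

definition facets :: "nat set \<Rightarrow> nat set set" where
  "facets \<sigma> = {\<sigma> - {x} | x. x \<in> \<sigma>}"

definition mu :: "(nat set \<Rightarrow> nat set \<Rightarrow> bool) \<Rightarrow> nat set \<Rightarrow> nat set" where
  "mu gt \<sigma> = (THE \<tau>. \<tau> \<in> facets \<sigma> \<and> (\<forall>\<tau>'\<in>facets \<sigma>. \<tau>' \<noteq> \<tau> \<longrightarrow> gt \<tau> \<tau>'))"

definition Vrho :: "(nat \<Rightarrow> nat \<Rightarrow> complex) \<Rightarrow> real \<Rightarrow> nat \<Rightarrow> (nat set \<Rightarrow> nat set \<Rightarrow> bool)
    \<Rightarrow> nat set \<Rightarrow> nat set" where
  "Vrho G kappa m gt \<rho> =
     {v. v \<notin> \<rho> \<and> insert v \<rho> \<in> clique_complex G kappa m \<and> mu gt (insert v \<rho>) = \<rho>}"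

definition Vrho_below :: "(nat \<Rightarrow> nat \<Rightarrow> complex) \<Rightarrow> real \<Rightarrow> nat \<Rightarrow> (nat set \<Rightarrow> nat set \<Rightarrow> bool)
    \<Rightarrow> nat set \<Rightarrow> nat \<Rightarrow> nat set" where
  "Vrho_below G kappa m gt \<rho> v =
     {u \<in> Vrho G kappa m gt \<rho>. gt (insert v \<rho>) (insert u \<rho>)}"

definition constructed_order :: "(nat \<Rightarrow> nat \<Rightarrow> complex) \<Rightarrow> real \<Rightarrow> nat
    \<Rightarrow> (nat set \<Rightarrow> nat set \<Rightarrow> bool) \<Rightarrow> bool" where
  "constructed_order G kappa m gt \<longleftrightarrow>
     (let K = clique_complex G kappa m in
     \<comment> \<open>strict total ordering of K\<close>
     (\<forall>\<sigma> \<tau>. gt \<sigma> \<tau> \<longrightarrow> \<sigma> \<in> K \<and> \<tau> \<in> K) \<and>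
     (\<forall>\<sigma>. \<not> gt \<sigma> \<sigma>) \<and>
     (\<forall>\<sigma> \<tau> \<upsilon>. gt \<sigma> \<tau> \<longrightarrow> gt \<tau> \<upsilon> \<longrightarrow> gt \<sigma> \<upsilon>) \<and>
     (\<forall>\<sigma>\<in>K. \<forall>\<tau>\<in>K. \<sigma> \<noteq> \<tau> \<longrightarrow> gt \<sigma> \<tau> \<or> gt \<tau> \<sigma>) \<and>
     \<comment> \<open>simplices of larger dimension are larger\<close>
     (\<forall>\<sigma>\<in>K. \<forall>\<tau>\<in>K. card \<sigma> > card \<tau> \<longrightarrow> gt \<sigma> \<tau>) \<and>
     \<comment> \<open>s-simplices, s >= 1, compared via their largest facets\<close>
     (\<forall>\<sigma>\<in>K. \<forall>\<tau>\<in>K. card \<sigma> = card \<tau> \<longrightarrow> card \<sigma> \<ge> 2 \<longrightarrow>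
         gt (mu gt \<sigma>) (mu gt \<tau>) \<longrightarrow> gt \<sigma> \<tau>) \<and>
     \<comment> \<open>greedy ordering of the cofaces rho+v with mu(rho+v) = rho\<close>
     (\<forall>\<rho>\<in>K. \<rho> \<noteq> {} \<longrightarrow>
        (\<exists>vs. distinct vs \<and> set vs = Vrho G kappa m gt \<rho> \<and>
           (\<forall>j. j + 1 < length vs \<longrightarrow>
              (\<exists>z\<in>set (drop j vs). z \<noteq> vs ! j \<and>
                 (\<forall>w\<in>set (drop j vs). \<forall>z'\<in>set (drop j vs). w \<noteq> z' \<longrightarrow>
                    cmod (G w z' - 1) \<le> cmod (G (vs ! j) z - 1)))) \<and>
           (\<forall>i j. i < j \<longrightarrow> j < length vs \<longrightarrow>
              gt (insert (vs ! i) \<rho>) (insert (vs ! j) \<rho>)))))"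

end

theory Submission
  imports Defs
begin

lemma set_drop_conv: "x \<in> set (drop n xs) \<longleftrightarrow> (\<exists>k. n \<le> k \<and> k < length xs \<and> xs ! k = x)"
proof
  assume "x \<in> set (drop n xs)"
  then obtain i where "i < length (drop n xs)" "drop n xs ! i = x" by (auto simp: in_set_conv_nth)
  thus "\<exists>k. n \<le> k \<and> k < length xs \<and> xs ! k = x" by (intro exI[of _ "n+i"]) auto
next
  assume "\<exists>k. n \<le> k \<and> k < length xs \<and> xs ! k = x"
  then obtain k where "n \<le> k" "k < length xs" "xs ! k = x" by blast
  thus "x \<in> set (drop n xs)" unfolding in_set_conv_nth by (intro exI[of _ "k-n"]) auto
qed

theorem lemma8:
  fixes G :: "nat \<Rightarrow> nat \<Rightarrow> complex" and kappa :: real and m :: nat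
    and gt :: "nat set \<Rightarrow> nat set \<Rightarrow> bool" and \<rho> :: "nat set" and v :: nat
  assumes "kappa > 0"
    and "\<forall>u\<in>{1..m}. G u u = 1"
    and "\<forall>u\<in>{1..m}. \<forall>w\<in>{1..m}. G u w = G w u"
    and "constructed_order G kappa m gt"
    and "\<rho> \<in> clique_complex G kappa m" and "\<rho> \<noteq> {}"
    and "v \<in> Vrho G kappa m gt \<rho>"
    and "Vrho_below G kappa m gt \<rho> v \<noteq> {}"
  shows "\<exists>u\<in>Vrho_below G kappa m gt \<rho> v.
           \<forall>w\<in>insert v (Vrho_below G kappa m gt \<rho> v).
           \<forall>z\<in>insert v (Vrho_below G kappa m gt \<rho> v).
             cmod (G w z - 1) \<le> cmod (G u v - 1)"
proof -
  let ?V = "Vrho G kappa m gt \<rho>"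
  let ?B = "Vrho_below G kappa m gt \<rho> v"
  note C = assms(4)[unfolded constructed_order_def Let_def]
  have irr: "\<And>s. \<not> gt s s" using C[THEN conjunct2, THEN conjunct1] by blast
  have tr: "\<And>a b c. gt a b \<Longrightarrow> gt b c \<Longrightarrow> gt a c"
    using C[THEN conjunct2, THEN conjunct2, THEN conjunct1] by blast
  note GR = C[THEN conjunct2, THEN conjunct2, THEN conjunct2, THEN conjunct2,
     THEN conjunct2, THEN conjunct2]
  from GR[rule_format, OF assms(5,6)]
obtain vs where d: "distinct vs" and sv: "set vs = ?V"
    and gr: "\<forall>j. j + 1 < length vs \<longrightarrow>
              (\<exists>z\<in>set (drop j vs). z \<noteq> vs ! j \<and>
                 (\<forall>w\<in>set (drop j vs). \<forall>z'\<in>set (drop j vs). w \<noteq> z' \<longrightarrow>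
                    cmod (G w z' - 1) \<le> cmod (G (vs ! j) z - 1)))"
    and ord: "\<forall>i j. i < j \<longrightarrow> j < length vs \<longrightarrow>
              gt (insert (vs ! i) \<rho>) (insert (vs ! j) \<rho>)"
    by blast
  obtain j where j: "j < length vs" "vs ! j = v" using assms(7) sv by (metis in_set_conv_nth)
  have Bset: "?B = set (drop (Suc j) vs)"
  proof
    show "?B \<subseteq> set (drop (Suc j) vs)"
    proof
      fix u assume u: "u \<in> ?B"
      hence uV: "u \<in> ?V" and g: "gt (insert v \<rho>) (insert u \<rho>)"
        unfolding Vrho_below_def by auto
      obtain k where k: "k < length vs" "vs ! k = u" using uV sv by (metis in_set_conv_nth)
      have "k > j"
      proof (rule ccontr)
        assume "\<not> j < k"
        hence "k = j \<or> k < j" by auto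
        thus False
        proof
          assume "k = j" thus False using g irr j k by auto
        next
          assume "k < j"
          hence "gt (insert u \<rho>) (insert v \<rho>)" using ord j k by blast
          thus False using g irr tr by blast
        qed
      qed
      thus "u \<in> set (drop (Suc j) vs)" using k
        unfolding set_drop_conv by (intro exI[of _ k]) auto
    qed
  next
    show "set (drop (Suc j) vs) \<subseteq> ?B"
    proof
      fix u assume "u \<in> set (drop (Suc j) vs)"
      then obtain k where k: "Suc j \<le> k" "k < length vs" "vs ! k = u"
        by (auto simp: set_drop_conv)
      have "gt (insert v \<rho>) (insert u \<rho>)" using ord j k by auto
      moreover have "u \<in> ?V" using k sv nth_mem by blast
      ultimately show "u \<in> ?B" unfolding Vrho_below_def by blast
    qed
  qed
  have "Suc j < length vs" using assms(8) Bset by (cases "Suc j < length vs") auto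
  then obtain z where z: "z \<in> set (drop j vs)" "z \<noteq> v"
    and bnd: "\<forall>w\<in>set (drop j vs). \<forall>z'\<in>set (drop j vs). w \<noteq> z' \<longrightarrow>
                    cmod (G w z' - 1) \<le> cmod (G v z - 1)"
    using gr j by auto
  have dj: "set (drop j vs) = insert v (set (drop (Suc j) vs))"
    using j by (metis Cons_nth_drop_Suc list.simps(15))
  have zB: "z \<in> ?B" using z dj Bset by auto
  have sub: "?V \<subseteq> {1..m}"
    unfolding Vrho_def clique_complex_def by auto
  have zm: "z \<in> {1..m}" "v \<in> {1..m}" using zB sub assms(7) unfolding Vrho_below_def by auto
  have sym: "G z v = G v z" using assms(3) zm by auto
  show ?thesis
  proof (intro bexI[OF _ zB] ballI)
    fix w z' assume w: "w \<in> insert v ?B" and z': "z' \<in> insert v ?B"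
    show "cmod (G w z' - 1) \<le> cmod (G z v - 1)"
    proof (cases "w = z'")
      case True
      have "w \<in> {1..m}" using w sub assms(7) unfolding Vrho_below_def by auto
      thus ?thesis using True assms(2) by auto
    next
      case False
      thus ?thesis using bnd w z' dj Bset sym by auto
    qed
  qed
qed

end
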